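(* Let $q\in(0,1]$. Then $\omega(R(SU_q(2)))=q^{-2}$.
   Context: $R(SU_q(2))$ is the fusion algebra with irreducible objects $I=\mathbb{Z}_+$, unit $0$, trivial involution, product $m\cdot n=\sum_{k\in\{|m-n|,|m-n|+2,\dots,m+n\}}k$, and dimension $d(n)=[n+1]_q$, where $[x]_q=\frac{q^{-x}-q^x}{q^{-1}-q}$ for $0<q<1$ and $[x]_1=x$. For $A\subseteq I$, $|A|=\sum_{\beta\in A}d(\beta)^2$. A finite generating set is a finite $X\subseteq I$ such that every $\beta\in I$ appears with nonzero coefficient in some product $x_1\cdots x_n$, $x_i\in X$; $\ell_X(0)=0$ and otherwise $\ell_X(\beta)$ is the least such $n\ge1$; $B_X(n)=\{\beta:\ell_X(\beta)\le n\}$. $\omega_X=\lim_{n\to\infty}|B_X(n)|^{1/n}$ (the limit exists) and $\omega(R(SU_q(2)))=\inf_X\omega_X$ over finite generating sets. *)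

theory Defs
  imports "HOL-Analysis.Analysis"
begin

text \<open>The fusion algebra R(SU_q(2)): irreducibles are natural numbers, elements of the
  positive cone are finitely supported functions nat => nat (multiplicities).\<close>

definition fus_coeff :: "nat \<Rightarrow> nat \<Rightarrow> nat \<Rightarrow> nat" where
  "fus_coeff m n k = (if (if m \<le> n then n - m else m - n) \<le> k \<and> k \<le> m + n
                         \<and> even (k + m + n) then 1 else 0)"

definition fus_mult :: "(nat \<Rightarrow> nat) \<Rightarrow> (nat \<Rightarrow> nat) \<Rightarrow> (nat \<Rightarrow> nat)" where
  "fus_mult a b = (\<lambda>k. \<Sum>m\<in>{m. a m \<noteq> 0}. \<Sum>n\<in>{n. b n \<noteq> 0}. a m * b n * fus_coeff m n k)"

definition fus_basis :: "nat \<Rightarrow> (nat \<Rightarrow> nat)" where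
  "fus_basis x = (\<lambda>k. if k = x then 1 else 0)"

definition fus_prod :: "nat list \<Rightarrow> (nat \<Rightarrow> nat)" where
  "fus_prod xs = foldr (\<lambda>x acc. fus_mult (fus_basis x) acc) xs (fus_basis 0)"

definition qnum :: "real \<Rightarrow> real \<Rightarrow> real" where
  "qnum q x = (if q = 1 then x else (q powr (- x) - q powr x) / (q powr (-1) - q))"

definition qdim :: "real \<Rightarrow> nat \<Rightarrow> real" where
  "qdim q n = qnum q (real n + 1)"

definition set_weight :: "real \<Rightarrow> nat set \<Rightarrow> real" where
  "set_weight q A = (\<Sum>\<beta>\<in>A. (qdim q \<beta>)\<^sup>2)"

definition generating_set :: "nat set \<Rightarrow> bool" where
  "generating_set X \<longleftrightarrow> finite X \<and>
     (\<forall>\<beta>. \<exists>xs. xs \<noteq> [] \<and> set xs \<subseteq> X \<and> fus_prod xs \<beta> \<noteq> 0)"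

definition word_length :: "nat set \<Rightarrow> nat \<Rightarrow> nat" where
  "word_length X \<beta> = (if \<beta> = 0 then 0 else
     (LEAST n. n \<ge> 1 \<and> (\<exists>xs. length xs = n \<and> set xs \<subseteq> X \<and> fus_prod xs \<beta> \<noteq> 0)))"

definition ball_X :: "nat set \<Rightarrow> nat \<Rightarrow> nat set" where
  "ball_X X n = {\<beta>. word_length X \<beta> \<le> n}"

definition growth_rate :: "real \<Rightarrow> nat set \<Rightarrow> real" where
  "growth_rate q X = lim (\<lambda>n. set_weight q (ball_X X n) powr (1 / real n))"

definition uniform_growth :: "real \<Rightarrow> real" where
  "uniform_growth q = Inf {growth_rate q X | X. generating_set X}"

end

theory Submission
  imports Defs "HOL-Real_Asymp.Real_Asymp"
begin

lemma supp_basis: "{m. fus_basis x m \<noteq> 0} = {x}"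
  by (auto simp: fus_basis_def)

lemma fus_mult_basis:
  "fus_mult (fus_basis x) b k = (\<Sum>n\<in>{n. b n \<noteq> 0}. b n * fus_coeff x n k)"
  unfolding fus_mult_def supp_basis by (simp add: fus_basis_def)

lemma fus_prod_Cons: "fus_prod (x # xs) = fus_mult (fus_basis x) (fus_prod xs)"
  by (simp add: fus_prod_def)

lemma supp_bound: "fus_prod xs k \<noteq> 0 \<Longrightarrow> k \<le> sum_list xs"
proof (induction xs arbitrary: k)
  case Nil
  then show ?case by (simp add: fus_prod_def fus_basis_def split: if_splits)
next
  case (Cons x xs)
  from Cons.prems have "(\<Sum>n\<in>{n. fus_prod xs n \<noteq> 0}. fus_prod xs n * fus_coeff x n k) \<noteq> 0"
    by (simp add: fus_prod_Cons fus_mult_basis)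
  then obtain n where "fus_prod xs n \<noteq> 0" "fus_coeff x n k \<noteq> 0"
    by (metis (no_types, lifting) mult_eq_0_iff sum.not_neutral_contains_not_neutral)
  then have "n \<le> sum_list xs" "k \<le> x + n" using Cons.IH
    by (auto simp: fus_coeff_def split: if_splits)
  then show ?case by simp
qed

lemma supp_finite: "finite {n. fus_prod xs n \<noteq> 0}"
proof -
  have "{n. fus_prod xs n \<noteq> 0} \<subseteq> {..sum_list xs}" using supp_bound by blast
  then show ?thesis using finite_subset by blast
qed

lemma top_coeff: "fus_prod xs (sum_list xs) \<ge> 1"
proof (induction xs)
  case Nil
  then show ?case by (simp add: fus_prod_def fus_basis_def)
next
  case (Cons x xs)
  let ?s = "sum_list xs"
  have ev: "even (x + ?s + x + ?s)" by presburger
  have le: "(if x \<le> ?s then ?s - x else x - ?s) \<le> x + ?s" by auto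
  have c: "fus_coeff x ?s (x + ?s) = 1" unfolding fus_coeff_def using ev le by (simp only: if_True simp_thms order_refl)
  have "fus_prod xs ?s * fus_coeff x ?s (x + ?s)
      \<le> (\<Sum>n\<in>{n. fus_prod xs n \<noteq> 0}. fus_prod xs n * fus_coeff x n (x + ?s))"
    using Cons.IH supp_finite[of xs]
    by (intro member_le_sum) auto
  then show ?case using Cons.IH c by (simp add: fus_prod_Cons fus_mult_basis)
qed

lemma sum_list_le: "(\<And>x. x \<in> set xs \<Longrightarrow> x \<le> (M::nat)) \<Longrightarrow> sum_list xs \<le> length xs * M"
  by (induction xs) (simp_all add: add_mono)

lemma ball_sub:
  assumes g: "generating_set X"
  shows "ball_X X n \<subseteq> {..n * Max X}"
proof
  fix b assume "b \<in> ball_X X n"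
  then have wl: "word_length X b \<le> n" by (simp add: ball_X_def)
  show "b \<in> {..n * Max X}"
  proof (cases "b = 0")
    case False
    let ?P = "\<lambda>n. n \<ge> 1 \<and> (\<exists>xs. length xs = n \<and> set xs \<subseteq> X \<and> fus_prod xs b \<noteq> 0)"
    from g obtain xs where "xs \<noteq> []" "set xs \<subseteq> X" "fus_prod xs b \<noteq> 0"
      unfolding generating_set_def by blast
    then have "length xs \<ge> 1" by (cases xs) auto
    then have "?P (length xs)" using \<open>set xs \<subseteq> X\<close> \<open>fus_prod xs b \<noteq> 0\<close> by blast
    then have "?P (LEAST n. ?P n)" by (rule LeastI)
    then obtain ys where ys: "length ys = (LEAST n. ?P n)" "set ys \<subseteq> X" "fus_prod ys b \<noteq> 0"
      by blast
    have fin: "finite X" using g by (simp add: generating_set_def)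
    have "b \<le> sum_list ys" using ys(3) by (rule supp_bound)
    also have "\<dots> \<le> length ys * Max X"
      using ys(2) fin by (intro sum_list_le) auto
    also have "\<dots> \<le> n * Max X" using wl ys(1) False by (simp add: word_length_def)
    finally show ?thesis by simp
  qed simp
qed

lemma ball_mem:
  assumes g: "generating_set X" and n: "n \<ge> 1" and X: "X \<noteq> {}"
  shows "n * Max X \<in> ball_X X n"
proof -
  have fin: "finite X" using g by (simp add: generating_set_def)
  let ?xs = "replicate n (Max X)"
  have "fus_prod ?xs (n * Max X) \<noteq> 0"
    using top_coeff[of ?xs] by (simp add: sum_list_replicate)
  moreover have "set ?xs \<subseteq> X" using Max_in[OF fin X] by auto
  ultimately have P: "n \<ge> 1 \<and> (\<exists>xs. length xs = n \<and> set xs \<subseteq> X \<and> fus_prod xs (n * Max X) \<noteq> 0)"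
    using n by (intro conjI exI[of _ ?xs]) auto
  have "(LEAST m. m \<ge> 1 \<and> (\<exists>xs. length xs = m \<and> set xs \<subseteq> X \<and> fus_prod xs (n * Max X) \<noteq> 0)) \<le> n"
    by (rule Least_le) (rule P)
  then have "word_length X (n * Max X) \<le> n"
    unfolding word_length_def by simp
  then show ?thesis by (simp add: ball_X_def)
qed

lemma gen_M:
  assumes g: "generating_set X"
  shows "X \<noteq> {}" "Max X \<ge> 1"
proof -
  have fin: "finite X" using g by (simp add: generating_set_def)
  from g obtain xs where xs: "xs \<noteq> []" "set xs \<subseteq> X" "fus_prod xs 1 \<noteq> 0"
    unfolding generating_set_def by blast
  then show "X \<noteq> {}" by auto
  have "1 \<le> sum_list xs" using xs(3) by (rule supp_bound)
  also have "\<dots> \<le> length xs * Max X"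
    using xs(2) fin by (intro sum_list_le) auto
  finally show "Max X \<ge> 1" by (cases "Max X") auto
qed

lemma gen_1: "generating_set {1}"
  unfolding generating_set_def
proof (intro conjI allI)
  fix b :: nat
  show "\<exists>xs. xs \<noteq> [] \<and> set xs \<subseteq> {1} \<and> fus_prod xs b \<noteq> 0"
  proof (cases "b = 0")
    case True
    have "fus_prod [1] 1 * fus_coeff 1 1 0
      \<le> (\<Sum>n\<in>{n. fus_prod [1] n \<noteq> 0}. fus_prod [1] n * fus_coeff 1 n 0)"
      using top_coeff[of "[1]"] supp_finite[of "[1]"]
      by (intro member_le_sum) auto
    moreover have "fus_prod [1] 1 \<ge> 1" using top_coeff[of "[1]"] by simp
    moreover have "fus_coeff 1 1 0 = 1" by (simp add: fus_coeff_def)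
    moreover have "fus_prod [1,1] 0 = (\<Sum>n\<in>{n. fus_prod [1] n \<noteq> 0}. fus_prod [1] n * fus_coeff 1 n 0)"
      by (rule trans[OF fun_cong[OF fus_prod_Cons] fus_mult_basis])
    ultimately have "fus_prod [1,1] 0 \<noteq> 0" by simp
    then show ?thesis using True by (intro exI[of _ "[1,1]"]) auto
  next
    case False
    have "fus_prod (replicate b 1) b \<noteq> 0"
      using top_coeff[of "replicate b (1::nat)"] by (simp add: sum_list_replicate)
    then show ?thesis using False by (intro exI[of _ "replicate b 1"]) auto
  qed
qed simp

lemma qq1: assumes "0 < (q::real)" "q * q = 1" shows "q = 1"
proof -
  have "(q - 1) * (q + 1) = 0" using assms(2) by (simp add: algebra_simps)
  then show ?thesis using assms(1) by simp
qed

lemma qdim_0: "0 < q \<Longrightarrow> qdim q 0 = 1"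
  using qq1[of q] by (simp add: qdim_def qnum_def powr_minus field_simps)

lemma qdim_Suc:
  assumes "0 < q" "q \<le> 1"
  shows "qdim q (Suc k) = (1/q) * qdim q k + q ^ (k+1)"
proof (cases "q = 1")
  case True then show ?thesis by (simp add: qdim_def qnum_def)
next
  case False
  then have q1: "q < 1" using assms by simp
  have pm: "q powr (- real m) = 1 / q ^ m" for m
    using assms by (simp add: powr_minus powr_realpow divide_inverse)
  have pp: "q powr (real m) = q ^ m" for m
    using assms by (simp add: powr_realpow)
  have x1: "-(real (Suc k) + 1) = - real (k+2)" "real (Suc k) + 1 = real (k+2)"
     "-(real k + 1) = - real (k+1)" "real k + 1 = real (k+1)" by simp_all
  have e1: "q powr (- (real (Suc k) + 1)) = 1 / q ^ (k+2)"
    by (subst x1(1)) (rule pm)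
  have e2: "q powr (real (Suc k) + 1) = q ^ (k+2)"
    by (subst x1(2)) (rule pp)
  have e3: "q powr (- (real k + 1)) = 1 / q ^ (k+1)"
    by (subst x1(3)) (rule pm)
  have e4: "q powr (real k + 1) = q ^ (k+1)"
    by (subst x1(4)) (rule pp)
  have e5: "q powr (-1) = 1/q" using assms by (simp add: powr_minus divide_inverse)
  have "q*q < 1*1" using q1 assms by (intro mult_strict_mono) auto
  then have "q < 1/q" using assms by (simp add: field_simps)
  then have d: "1/q - q \<noteq> 0" by linarith
  have "qdim q (Suc k) = (q powr (- (real (Suc k) + 1)) - q powr (real (Suc k) + 1)) / (q powr (-1) - q)"
    by (simp only: qdim_def qnum_def if_not_P[OF False])
  also have "\<dots> = (1 / q ^ (k+2) - q ^ (k+2)) / (1/q - q)"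
    by (simp only: e1 e2 e5)
  also have "\<dots> = (1/q) * ((1 / q ^ (k+1) - q ^ (k+1)) / (1/q - q)) + q ^ (k+1)"
    using assms d by (simp add: field_simps)
  also have "\<dots> = (1/q) * ((q powr (- (real k + 1)) - q powr (real k + 1)) / (q powr (-1) - q)) + q ^ (k+1)"
    by (simp only: e3 e4 e5)
  also have "\<dots> = (1/q) * qdim q k + q ^ (k+1)"
    by (simp only: qdim_def qnum_def if_not_P[OF False])
  finally show ?thesis .
qed

lemma qdim_bounds:
  assumes "0 < q" "q \<le> 1"
  shows "(1/q) ^ k \<le> qdim q k \<and> qdim q k \<le> (real k + 1) * (1/q) ^ k"
proof (induction k)
  case 0 then show ?case using assms by (simp add: qdim_0)
next
  case (Suc k)
  have r1: "1 \<le> 1/q" using assms by simp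
  have a: "q ^ Suc k \<le> 1" using assms power_le_one[of q "Suc k"] by simp
  have b: "1 \<le> (1/q) ^ Suc k" by (rule one_le_power[OF r1])
  have c: "0 \<le> q ^ Suc k" using assms by simp
  have "(1/q) ^ Suc k \<le> (1/q) * qdim q k"
    using Suc.IH assms by (simp add: divide_right_mono)
  moreover have "(1/q) * qdim q k \<le> (1/q) * ((real k + 1) * (1/q) ^ k)"
    using Suc.IH assms by (intro mult_left_mono) auto
  ultimately have h: "(1/q) ^ Suc k \<le> (1/q) * qdim q k"
     "(1/q) * qdim q k \<le> (real k + 1) * (1/q) ^ Suc k" by (simp_all add: algebra_simps add_divide_distrib)
  have e: "(real (Suc k) + 1) * (1/q) ^ Suc k = (real k + 1) * (1/q) ^ Suc k + (1/q) ^ Suc k"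
    by (simp only: of_nat_Suc distrib_right mult_1_left)
  have s: "qdim q (Suc k) = (1/q) * qdim q k + q ^ Suc k" using qdim_Suc[OF assms] by simp
  show ?case using a b c h s e by (intro conjI; linarith)
qed

lemma growth_eq:
  assumes q: "0 < q" "q \<le> 1" and g: "generating_set X"
  shows "growth_rate q X = (1/q) ^ (2 * Max X)"
proof -
  define M where "M = Max X"
  define r where "r = 1/q"
  have r1: "1 \<le> r" using q by (simp add: r_def)
  have M1: "M \<ge> 1" using gen_M[OF g] by (simp add: M_def)
  define W where "W n = set_weight q (ball_X X n)" for n
  have D: "r ^ k \<le> qdim q k \<and> qdim q k \<le> (real k + 1) * r ^ k" for k
    using qdim_bounds[OF q] by (simp add: r_def)
  have low: "r ^ (2 * (n * M)) \<le> W n" if n: "n \<ge> 1" for n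
  proof -
    have fin: "finite (ball_X X n)"
      using ball_sub[OF g] finite_subset by blast
    have "r ^ (2 * (n * M)) = (r ^ (n*M))^2" by (simp add: power_mult mult.commute)
    also have "\<dots> \<le> (qdim q (n*M))^2"
      using D[of "n*M"] r1 by (intro power_mono) auto
    also have "\<dots> \<le> W n" unfolding W_def set_weight_def
      using ball_mem[OF g n gen_M(1)[OF g]] fin
      by (intro member_le_sum) (auto simp: M_def)
    finally show ?thesis .
  qed
  have up: "W n \<le> (real (n*M) + 1) ^ 3 * r ^ (2 * (n * M))" for n
  proof -
    let ?N = "n * M"
    have "W n \<le> (\<Sum>b\<in>{..?N}. (qdim q b)^2)"
      unfolding W_def set_weight_def using ball_sub[OF g, of n]
      by (intro sum_mono2) (auto simp: M_def)
    also have "\<dots> \<le> (\<Sum>b\<in>{..?N}. ((real ?N + 1) * r ^ ?N)^2)"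
    proof (intro sum_mono power_mono)
      fix b assume "b \<in> {..?N}"
      then have bN: "b \<le> ?N" by simp
      have hb: "real b \<le> real ?N" using bN by (simp only: of_nat_le_iff)
      have "qdim q b \<le> (real b + 1) * r ^ b" using D by blast
      also have "\<dots> \<le> (real ?N + 1) * r ^ ?N"
        using mult_mono[OF _ power_increasing[OF bN r1], of "real b + 1" "real ?N + 1"] hb r1
        by simp
      finally show "qdim q b \<le> (real ?N + 1) * r ^ ?N" .
      show "0 \<le> qdim q b" using D[of b] r1 by (meson order_trans zero_le_power zero_le_one)
    qed
    also have "\<dots> = (real ?N + 1) ^ 3 * r ^ (2 * ?N)"
    proof -
      have "r ^ (2 * ?N) = r ^ ?N * r ^ ?N" by (simp add: mult_2 power_add)
      then show ?thesis by (simp add: power_mult_distrib power2_eq_square power3_eq_cube)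
    qed
    finally show ?thesis .
  qed
  have rpos: "0 < r" using r1 by simp
  have lowp: "r ^ (2*M) \<le> W n powr (1 / real n)" if n: "n \<ge> 1" for n
  proof -
    have "r ^ (2*M) = (r ^ (2 * (n * M))) powr (1 / real n)"
      using rpos n by (simp add: powr_realpow[symmetric] powr_powr)
    also have "\<dots> \<le> W n powr (1 / real n)"
      using low[OF n] rpos by (intro powr_mono2) auto
    finally show ?thesis .
  qed
  have upp: "W n powr (1 / real n) \<le> (real n * real M + 1) powr (3 / real n) * r ^ (2*M)"
    if n: "n \<ge> 1" for n
  proof -
    have "W n powr (1 / real n) \<le> ((real (n*M) + 1) ^ 3 * r ^ (2 * (n * M))) powr (1 / real n)"
    proof (rule powr_mono2)
      have "0 \<le> r ^ (2 * (n * M))" using rpos by simp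
      then show "0 \<le> W n" using low[OF n] by linarith
    qed (use up[of n] in auto)
    also have "\<dots> = (real n * real M + 1) powr (3 / real n) * r ^ (2*M)"
    proof -
      have xp: "0 < real n * real M + 1" by (simp add: add_nonneg_pos)
      have x3: "(real n * real M + 1) ^ 3 = (real n * real M + 1) powr (3::real)"
        using powr_realpow[OF xp, of 3] by simp
      have "((real n * real M + 1) ^ 3) powr (1 / real n) = (real n * real M + 1) powr (3 * (1 / real n))"
        unfolding x3 by (rule powr_powr)
      then have "((real n * real M + 1) ^ 3) powr (1 / real n) = (real n * real M + 1) powr (3 / real n)"
        by simp
      then show ?thesis
        using rpos n by (simp add: powr_mult powr_realpow[symmetric] powr_powr)
    qed
    finally show ?thesis .
  qed
  have t1: "((\<lambda>n. (real n * real M + 1) powr (3 / real n)) \<longlongrightarrow> 1) sequentially"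
    using M1 by real_asymp
  have t2: "((\<lambda>n. (real n * real M + 1) powr (3 / real n) * r ^ (2*M)) \<longlongrightarrow> r ^ (2*M)) sequentially"
    using tendsto_mult[OF t1 tendsto_const, of "r ^ (2*M)"] by simp
  have "((\<lambda>n. W n powr (1 / real n)) \<longlongrightarrow> r ^ (2*M)) sequentially"
    by (rule tendsto_sandwich[OF _ _ tendsto_const t2])
       (auto intro!: lowp upp simp: eventually_sequentially)
  then have "lim (\<lambda>n. W n powr (1 / real n)) = r ^ (2*M)" by (rule limI)
  then show ?thesis by (simp add: growth_rate_def W_def r_def M_def)
qed

theorem proposition4p5:
  fixes q :: real
  assumes "0 < q" and "q \<le> 1"
  shows "uniform_growth q = q powr (-2)"
proof -
  have qp: "q powr (-2) = (1/q) ^ 2"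
    using assms by (simp add: powr_minus powr_realpow divide_inverse power_inverse)
  have mem: "(1/q) ^ 2 \<in> {growth_rate q X | X. generating_set X}"
    apply (rule CollectI, rule exI[of _ "{1}"])
    using growth_eq[OF assms gen_1] gen_1 by simp
  have lb: "(1/q) ^ 2 \<le> x" if "x \<in> {growth_rate q X | X. generating_set X}" for x
  proof -
    from that obtain X where X: "generating_set X" "x = growth_rate q X" by blast
    have "1 \<le> 1/q" using assms by simp
    moreover have "2 \<le> 2 * Max X" using gen_M(2)[OF X(1)] by simp
    ultimately show ?thesis using growth_eq[OF assms X(1)] X(2)
      by (simp add: power_increasing)
  qed
  show ?thesis unfolding uniform_growth_def qp
    by (rule cInf_eq_minimum[OF mem lb]) auto
qed

end
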